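(* Let $k\ge2$, let $A=\{a_1,\dots,a_n\}$ be a sorted multiset of positive integers ($a_1\le\dots\le a_n$), and let $\varepsilon\in(0,1)$. Let $c=1+\left\lceil\left(1+\frac1\varepsilon\right)\ln\frac{2(k-1)}{\varepsilon^2}\right\rceil$ and $C=(c+1)(k-1)$. Then $$\mathrm{OPT}(A)\le\min_{k\le j\le n}\mathrm{OPT_L}\bigl(A[j-C+1,j]\bigr)\le(1+\varepsilon)\,\mathrm{OPT}(A).$$
   Context: $[n]=\{1,\dots,n\}$; $\Sigma(S,A)=\sum_{i\in S}a_i$; for pairwise disjoint $S_1,\dots,S_k\subseteq[n]$, $\mathcal{R}(S_1,\dots,S_k,A)=\max_i\Sigma(S_i,A)/\min_i\Sigma(S_i,A)$ if the minimum is positive and $+\infty$ otherwise. $\mathrm{OPT}(A)$ is the minimum ratio over all $k$-tuples of pairwise disjoint subsets of the index set of $A$ (the $k$-SSR problem). $\mathrm{OPT_L}(A)$ is the minimum ratio over such $k$-tuples that additionally contain the largest index (i.e. the largest element of the sorted multiset must belong to some $S_i$; the $k$-SSR$_L$ problem). $A[l,r]$ denotes the sorted multiset consisting of the items $a_i$ with $l\le i\le r$ (so indices below $1$ are simply absent). *)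

theory Defs
  imports Complex_Main "HOL-Library.Extended_Real"
begin

text \<open>A sorted multiset A = {a_1,...,a_n} is represented as a sorted list;
  item a_i is A ! (i - 1), index set [n] = {1..length A}.
  A k-tuple of subsets is a function S :: nat \<Rightarrow> nat set, components S 0, ..., S (k-1).\<close>

definition SigmaS :: "nat set \<Rightarrow> nat list \<Rightarrow> real" where
  "SigmaS S A = (\<Sum>i\<in>S. real (A ! (i - 1)))"

definition ratio :: "nat \<Rightarrow> (nat \<Rightarrow> nat set) \<Rightarrow> nat list \<Rightarrow> ereal" where
  "ratio k S A =
     (let mx = Max ((\<lambda>i. SigmaS (S i) A) ` {..<k});
          mn = Min ((\<lambda>i. SigmaS (S i) A) ` {..<k})
      in if mn > 0 then ereal (mx / mn) else \<infinity>)"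

definition feasible :: "nat \<Rightarrow> (nat \<Rightarrow> nat set) \<Rightarrow> nat list \<Rightarrow> bool" where
  "feasible k S A \<longleftrightarrow> (\<forall>i<k. S i \<subseteq> {1..length A}) \<and>
     (\<forall>i<k. \<forall>j<k. i \<noteq> j \<longrightarrow> S i \<inter> S j = {})"

definition OPT :: "nat \<Rightarrow> nat list \<Rightarrow> ereal" where
  "OPT k A = (INF S\<in>{S. feasible k S A}. ratio k S A)"

definition OPT_L :: "nat \<Rightarrow> nat list \<Rightarrow> ereal" where
  "OPT_L k A = (INF S\<in>{S. feasible k S A \<and> length A \<in> (\<Union>i<k. S i)}. ratio k S A)"

text \<open>A[l,r]: the sorted multiset of items a_i with l \<le> i \<le> r (indices < 1 absent).\<close>
definition subrange :: "nat list \<Rightarrow> int \<Rightarrow> int \<Rightarrow> nat list" where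
  "subrange A l r = map (\<lambda>i. A ! (i - 1)) [nat (max 1 l) ..< nat r + 1]"

end

theory Submission
  imports Defs
begin

lemma SigmaS_shift:
  assumes "\<forall>t\<in>T. 1 \<le> t \<and> t \<le> length B"
    and "\<forall>t. 1 \<le> t \<and> t \<le> length B \<longrightarrow> B!(t-1) = A!(t+d-1)"
  shows "SigmaS ((\<lambda>t. t+d) ` T) A = SigmaS T B"
proof -
  have "SigmaS ((\<lambda>t. t+d) ` T) A = (\<Sum>t\<in>T. real (A!(t+d-1)))"
    unfolding SigmaS_def by (subst sum.reindex) (auto simp: inj_on_def)
  also have "\<dots> = SigmaS T B" unfolding SigmaS_def
    using assms by (intro sum.cong) auto
  finally show ?thesis .
qed

lemma ratio_cong:
  assumes "\<forall>i<k. SigmaS (T i) A = SigmaS (T' i) B"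
  shows "ratio k T A = ratio k T' B"
proof -
  have "(\<lambda>i. SigmaS (T i) A) ` {..<k} = (\<lambda>i. SigmaS (T' i) B) ` {..<k}"
    using assms by (intro image_cong) auto
  then show ?thesis unfolding ratio_def by simp
qed

lemma ratio_ge1:
  assumes "k > 0" shows "1 \<le> ratio k S A"
proof -
  let ?X = "(\<lambda>i. SigmaS (S i) A) ` {..<k}"
  have fin: "finite ?X" and ne: "?X \<noteq> {}" using assms by auto
  have "Min ?X \<le> Max ?X" using fin ne by (meson Max_ge Min_le ex_in_conv order.trans)
  then show ?thesis unfolding ratio_def Let_def by (auto simp: field_simps)
qed

lemma ratio_le:
  assumes "k > 0" "0 < l" "\<forall>i<k. l \<le> SigmaS (T i) A \<and> SigmaS (T i) A \<le> h"
  shows "ratio k T A \<le> ereal (h / l)"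
proof -
  let ?X = "(\<lambda>i. SigmaS (T i) A) ` {..<k}"
  have fin: "finite ?X" and ne: "?X \<noteq> {}" using assms by auto
  have mn: "l \<le> Min ?X" using fin ne assms by (auto simp: Min_ge_iff)
  have mx: "Max ?X \<le> h" using fin ne assms by (auto simp: Max_le_iff)
  have "Min ?X \<le> Max ?X" using fin ne by (meson Max_ge Min_le ex_in_conv order.trans)
  have "Max ?X / Min ?X \<le> h / l"
    using mn mx assms(2) \<open>Min ?X \<le> Max ?X\<close> by (intro frac_le) auto
  then show ?thesis using mn assms(2) unfolding ratio_def Let_def by auto
qed

lemma ereal_le_mult_INF:
  fixes X :: ereal and e :: real
  assumes "e > 0" "\<forall>S\<in>D. X \<le> ereal e * f S"
  shows "X \<le> ereal e * (INF S\<in>D. f S)"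
proof -
  have "X / ereal e \<le> (INF S\<in>D. f S)"
    using assms by (intro INF_greatest) (simp add: ereal_divide_le_pos)
  then show ?thesis using assms by (simp add: ereal_divide_le_pos)
qed

lemma subrange_len:
  "length (subrange A l (int j)) = j + 1 - nat (max 1 l)"
  unfolding subrange_def by (simp del: upt_Suc)

lemma subrange_nth:
  assumes "1 \<le> t" "t \<le> length (subrange A l (int j))"
  shows "(subrange A l (int j))!(t-1) = A!(t + (nat (max 1 l) - 1) - 1)"
proof -
  let ?lo = "nat (max 1 l)"
  have lo1: "?lo \<ge> 1" by simp
  have len: "t \<le> Suc j - ?lo" using assms(2) unfolding subrange_len by simp
  have eq: "subrange A l (int j) = map (\<lambda>i. A!(i-1)) [?lo..<Suc j]" unfolding subrange_def by simp
  have l2: "t - 1 < length [?lo..<Suc j]" using len assms(1) by (simp del: upt_Suc)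
  have idx: "?lo + (t-1) - 1 = t + (?lo - 1) - 1" using lo1 assms(1) by linarith
  have "(subrange A l (int j))!(t-1) = A!([?lo..<Suc j]!(t-1) - 1)"
    unfolding eq using l2 by (simp del: upt_Suc)
  also have "[?lo..<Suc j]!(t-1) = ?lo + (t-1)"
    using len assms(1) by (intro nth_upt) simp
  finally show ?thesis by (metis idx)
qed

lemma OPT_le_OPT_L:
  assumes "j \<le> length A"
  shows "OPT k A \<le> OPT_L k (subrange A l (int j))"
  unfolding OPT_L_def
proof (rule INF_greatest)
  let ?B = "subrange A l (int j)"
  define d where "d = nat (max 1 l) - 1"
  fix T' assume "T' \<in> {S. feasible k S ?B \<and> length ?B \<in> (\<Union>i<k. S i)}"
  then have fT': "feasible k T' ?B" by auto
  define T where "T i = (\<lambda>t. t+d) ` T' i" for i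
  have nth: "\<forall>t. 1 \<le> t \<and> t \<le> length ?B \<longrightarrow> ?B!(t-1) = A!(t+d-1)"
    using subrange_nth d_def by blast
  have sub: "\<forall>i<k. \<forall>t\<in>T' i. 1 \<le> t \<and> t \<le> length ?B"
    using fT' unfolding feasible_def by fastforce
  have eq: "\<forall>i<k. SigmaS (T i) A = SigmaS (T' i) ?B"
  proof (intro allI impI)
    fix i assume i: "i < k"
    show "SigmaS (T i) A = SigmaS (T' i) ?B" unfolding T_def
      by (rule SigmaS_shift) (use sub nth i in auto)
  qed
  have len: "\<forall>t. 1 \<le> t \<and> t \<le> length ?B \<longrightarrow> 1 \<le> t + d \<and> t + d \<le> length A"
    using assms unfolding subrange_len d_def by auto
  have "feasible k T A"
    unfolding feasible_def T_def
  proof (intro conjI allI impI)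
    fix i assume i: "i < k"
    show "(\<lambda>t. t + d) ` T' i \<subseteq> {1..length A}"
    proof
      fix u assume "u \<in> (\<lambda>t. t + d) ` T' i"
      then obtain t where t: "t \<in> T' i" "u = t + d" by blast
      have "1 \<le> t \<and> t \<le> length ?B" using sub i t(1) by blast
      then show "u \<in> {1..length A}" using len t(2) by auto
    qed
  next
    fix i i' assume ii: "i < k" "i' < k" "i \<noteq> i'"
    have "T' i \<inter> T' i' = {}" using fT' ii unfolding feasible_def by blast
    then show "(\<lambda>t. t + d) ` T' i \<inter> (\<lambda>t. t + d) ` T' i' = {}"
      by (auto simp: image_iff)
  qed
  then have "OPT k A \<le> ratio k T A" unfolding OPT_def by (intro INF_lower) auto
  also have "\<dots> = ratio k T' ?B" using eq by (rule ratio_cong)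
  finally show "OPT k A \<le> ratio k T' ?B" .
qed

lemma window:
  fixes C :: int
  assumes "j \<le> length A" "k \<le> j" "feasible k T A"
    and "\<forall>i<k. T i \<subseteq> {nat (max 1 (int j - C + 1))..j}" "j \<in> (\<Union>i<k. T i)"
  shows "(INF j\<in>{k..length A}. OPT_L k (subrange A (int j - C + 1) (int j))) \<le> ratio k T A"
proof -
  let ?l = "int j - C + 1"
  let ?B = "subrange A ?l (int j)"
  define lo where "lo = nat (max 1 ?l)"
  have lo1: "1 \<le> lo" unfolding lo_def by simp
  define d where "d = lo - 1"
  define T' where "T' i = (\<lambda>t. t - d) ` T i" for i
  have lenB: "length ?B = j - d" using subrange_len[of A ?l j] lo1
    unfolding lo_def[symmetric] d_def by simp
  have Tall: "\<forall>i<k. T i \<subseteq> {lo..j}" using assms(4) unfolding lo_def .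
  have Tr: "lo \<le> t \<and> t \<le> j" if "i<k" "t \<in> T i" for i t
  proof -
    have "T i \<subseteq> {lo..j}" using Tall that(1) by blast
    then show ?thesis using that(2) by auto
  qed
  have Tge: "d < t \<and> t \<le> j" if "i<k" "t \<in> T i" for i t
    using Tr[OF that] lo1 unfolding d_def by linarith
  have TT: "T i = (\<lambda>t. t + d) ` T' i" if "i < k" for i
  proof -
    have "(\<lambda>t. t + d) ` T' i = (\<lambda>t. t - d + d) ` T i" unfolding T'_def by (simp add: image_image)
    also have "\<dots> = T i"
    proof -
      have "\<forall>t\<in>T i. t - d + d = t" using Tge[OF that] by (meson le_add_diff_inverse2 less_imp_le_nat)
      then show ?thesis by (metis (no_types, lifting) image_cong image_ident)
    qed
    finally show ?thesis by simp
  qed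
  have T'sub: "1 \<le> t \<and> t \<le> length ?B" if a: "i<k" "t \<in> T' i" for i t
  proof -
    obtain u where u: "u \<in> T i" "t = u - d" using a(2) unfolding T'_def by auto
    have "d < u \<and> u \<le> j" using Tge[OF a(1) u(1)] .
    then show ?thesis using u(2) lenB by (auto simp: diff_le_mono)
  qed
  have nth: "?B!(t-1) = A!(t+d-1)" if "1 \<le> t" "t \<le> length ?B" for t
    using subrange_nth[OF that] unfolding lo_def[symmetric] d_def[symmetric] .
  have eq: "\<forall>i<k. SigmaS (T i) A = SigmaS (T' i) ?B"
  proof (intro allI impI)
    fix i assume i: "i < k"
    have "SigmaS ((\<lambda>t. t+d) ` T' i) A = SigmaS (T' i) ?B"
      by (rule SigmaS_shift) (use T'sub nth i in blast)+
    then show "SigmaS (T i) A = SigmaS (T' i) ?B" using TT[OF i] by simp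
  qed
  have "feasible k T' ?B"
    unfolding feasible_def
  proof (intro conjI allI impI)
    fix i assume "i < k"
    then show "T' i \<subseteq> {1..length ?B}" using T'sub by auto
  next
    fix i i' assume ii: "i < k" "i' < k" "i \<noteq> i'"
    have inj: "inj_on (\<lambda>t. t - d) (T i \<union> T i')" unfolding inj_on_def
    proof (intro ballI impI)
      fix x y assume xy: "x \<in> T i \<union> T i'" "y \<in> T i \<union> T i'" "x - d = y - d"
      have "d < x" "d < y" using Tge ii xy(1,2) by blast+
      then show "x = y" using xy(3) by arith
    qed
    have "T i \<inter> T i' = {}" using assms(3) ii unfolding feasible_def by blast
    then show "T' i \<inter> T' i' = {}" unfolding T'_def
      using inj_on_image_Int[OF inj, of "T i" "T i'"] by auto
  qed
  moreover have "length ?B \<in> (\<Union>i<k. T' i)"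
    using assms(5) lenB unfolding T'_def by auto
  ultimately have "OPT_L k ?B \<le> ratio k T' ?B" unfolding OPT_L_def by (intro INF_lower) auto
  also have "\<dots> = ratio k T A" using eq by (intro ratio_cong[symmetric]) 
  finally have le: "OPT_L k ?B \<le> ratio k T A" .
  have jm: "j \<in> {k..length A}" using assms by auto
  show ?thesis using INF_lower2[OF jm, of "\<lambda>j. OPT_L k (subrange A (int j - C + 1) (int j))" "ratio k T A"] le
    by blast
qed

lemma geo_sum:
  fixes f :: "nat \<Rightarrow> real" and \<epsilon> :: real
  assumes k: "k \<ge> 2" and e: "\<epsilon> > 0"
    and dec: "\<forall>i. k \<le> i \<and> i \<le> n \<longrightarrow> (1+\<epsilon>) * f (i - k + 1) < f i"
    and nn: "\<forall>i. 1 \<le> i \<and> i \<le> n \<longrightarrow> 0 \<le> f i"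
    and mono: "\<forall>i i'. 1 \<le> i \<and> i \<le> i' \<and> i' \<le> n \<longrightarrow> f i \<le> f i'"
  shows "1 \<le> p \<Longrightarrow> p \<le> n \<Longrightarrow> (\<Sum>i=1..p. f i) \<le> (real k - 1) * (1+\<epsilon>) / \<epsilon> * f p"
proof (induction p rule: less_induct)
  case (less p)
  define K where "K = (real k - 1) * (1+\<epsilon>) / \<epsilon>"
  have K1: "real k - 1 \<le> K"
  proof -
    have "1 \<le> (1+\<epsilon>)/\<epsilon>" using e by (simp add: field_simps)
    then have "(real k - 1) * 1 \<le> (real k - 1) * ((1+\<epsilon>)/\<epsilon>)" using k
      by (intro mult_left_mono) auto
    then show ?thesis unfolding K_def by simp
  qed
  have fp: "0 \<le> f p" using nn less.prems by auto
  show ?case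
  proof (cases "p < k")
    case True
    have "(\<Sum>i=1..p. f i) \<le> (\<Sum>i=1..p. f p)"
      by (rule sum_mono) (use mono less.prems in auto)
    also have "\<dots> = real p * f p" by simp
    also have "\<dots> \<le> (real k - 1) * f p" using True fp by (intro mult_right_mono) auto
    also have "\<dots> \<le> K * f p" using K1 fp by (intro mult_right_mono) auto
    finally show ?thesis unfolding K_def .
  next
    case False
    define q where "q = p - k + 1"
    have q1: "1 \<le> q" "q < p" using False k unfolding q_def by auto
    have pq: "p = q + (k - 1)" using False k unfolding q_def by auto
    have "(\<Sum>i=1..p. f i) = (\<Sum>i=1..q. f i) + (\<Sum>i=q+1..q+(k-1). f i)"
      unfolding pq by (rule sum.ub_add_nat) (use q1 in auto)
    also have "(\<Sum>i=q+1..q+(k-1). f i) \<le> real (card {q+1..q+(k-1)}) * f p"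
      by (rule sum_bounded_above) (use mono less.prems pq q1 in auto)
    also have "real (card {q+1..q+(k-1)}) = real k - 1" using k by simp
    also have "(\<Sum>i=1..q. f i) \<le> K * f q" using less.IH[OF q1(2) q1(1)] less.prems q1 unfolding K_def by simp
    also have "K * f q \<le> (K - (real k - 1)) * f p"
    proof -
      define L where "L = (real k - 1) / \<epsilon>"
      have L0: "0 \<le> L" unfolding L_def using e k by simp
      have KL: "K = L * (1+\<epsilon>)" unfolding K_def L_def by simp
      have KL2: "K - (real k - 1) = L" unfolding K_def L_def using e by (simp add: field_simps)
      have "(1+\<epsilon>) * f q < f p" using dec less.prems False unfolding q_def by auto
      then have le: "L * ((1+\<epsilon>) * f q) \<le> L * f p" using L0 by (intro mult_left_mono) auto
      have "K * f q = L * ((1+\<epsilon>) * f q)" unfolding KL by simp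
      then show ?thesis using le KL2 by (simp only:)
    qed
    finally show ?thesis unfolding K_def by (simp add: algebra_simps)
  qed
qed

lemma geo_decay:
  fixes f :: "nat \<Rightarrow> real" and \<epsilon> :: real
  assumes k: "k \<ge> 2" and e: "\<epsilon> > 0"
    and dec: "\<forall>i. k \<le> i \<and> i \<le> n \<longrightarrow> (1+\<epsilon>) * f (i - k + 1) < f i"
    and q: "1 \<le> q"
  shows "q + t*(k-1) \<le> n \<Longrightarrow> (1+\<epsilon>)^t * f q \<le> f (q + t*(k-1))"
proof (induction t)
  case 0
  then show ?case by simp
next
  case (Suc t)
  define i where "i = q + Suc t * (k-1)"
  have i2: "i = q + t*(k-1) + (k-1)" unfolding i_def by simp
  have ik: "k \<le> i" "i \<le> n" using q k Suc.prems i2 unfolding i_def by linarith+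
  have ii: "i - k + 1 = q + t*(k-1)" using q k i2 by linarith
  have "(1+\<epsilon>)^Suc t * f q = (1+\<epsilon>) * ((1+\<epsilon>)^t * f q)" by simp
  also have "\<dots> \<le> (1+\<epsilon>) * f (q + t*(k-1))"
    using Suc.IH Suc.prems e by (intro mult_left_mono) auto
  also have "\<dots> < f i" using dec ik ii by metis
  finally show ?case unfolding i_def by simp
qed

lemma part2:
  fixes k :: nat and A :: "nat list" and \<epsilon> :: real and cn :: nat and C :: int
  assumes k2: "k \<ge> 2" and sA: "sorted A" and pA: "\<forall>x\<in>set A. x > 0" and e: "0 < \<epsilon>"
    and cn: "cn \<ge> 1" and key: "real k - 1 \<le> \<epsilon>^2 * (1+\<epsilon>)^(cn-1)"
    and CC: "C = (int cn + 1) * (int k - 1)"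
    and fS: "feasible k S A"
  shows "(INF j\<in>{k..length A}. OPT_L k (subrange A (int j - C + 1) (int j))) \<le> ereal (1+\<epsilon>) * ratio k S A"
proof -
  let ?X = "(INF j\<in>{k..length A}. OPT_L k (subrange A (int j - C + 1) (int j)))"
  define n where "n = length A"
  define a where "a i = real (A!(i-1))" for i
  have apos: "0 < a i" if "1 \<le> i" "i \<le> n" for i
    using pA that unfolding a_def n_def by (simp add: nth_mem)
  have amono: "a i \<le> a i'" if "1 \<le> i" "i \<le> i'" "i' \<le> n" for i i'
    using sorted_nth_mono[OF sA, of "i-1" "i'-1"] that unfolding a_def n_def by simp
  have Sig: "SigmaS T A = sum a T" for T unfolding SigmaS_def a_def by simp
  have CK: "int k \<le> C" unfolding CC using k2 cn
  proof -
    have "(int cn + 1) * (int k - 1) \<ge> 2 * (int k - 1)" using cn k2 by (intro mult_right_mono) auto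
    moreover have "int k \<ge> 2" using k2 by simp
    ultimately show "int k \<le> (int cn + 1) * (int k - 1)" by arith
  qed
  have e1: "ereal 1 \<le> ereal (1+\<epsilon>)" using e by simp
  have r1: "1 \<le> ratio k S A" using k2 by (intro ratio_ge1) auto
  have r0: "0 \<le> ratio k S A"
  proof -
    have "(0::ereal) \<le> 1" by simp
    then show ?thesis using r1 by (rule order.trans)
  qed
  have rle: "ratio k S A \<le> ereal (1+\<epsilon>) * ratio k S A"
    using ereal_mult_right_mono[OF e1 r0] by simp
  have single: "?X \<le> ereal (a j' / a (j' - k + 1))" if j': "k \<le> j'" "j' \<le> n" for j'
  proof -
    define T where "T t = {j' - t}" for t
    have feas: "feasible k T A" unfolding feasible_def T_def n_def[symmetric]
      using j' by auto
    have win: "\<forall>i<k. T i \<subseteq> {nat (max 1 (int j' - C + 1))..j'}"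
      unfolding T_def using j' CK by auto
    have jin: "j' \<in> (\<Union>i<k. T i)" unfolding T_def using k2 by (intro UN_I[of 0]) auto
    have "?X \<le> ratio k T A" by (rule window) (use j' feas win jin n_def in auto)
    also have "\<dots> \<le> ereal (a j' / a (j' - k + 1))"
    proof (rule ratio_le)
      show "0 < k" using k2 by simp
      show "0 < a (j' - k + 1)" using j' k2 by (intro apos) auto
      show "\<forall>i<k. a (j' - k + 1) \<le> SigmaS (T i) A \<and> SigmaS (T i) A \<le> a j'"
      proof (intro allI impI)
        fix i assume i: "i < k"
        have "SigmaS (T i) A = a (j' - i)" unfolding T_def Sig by simp
        moreover have "a (j' - k + 1) \<le> a (j' - i)" using i j' k2 by (intro amono) auto
        moreover have "a (j' - i) \<le> a j'" using i j' k2 by (intro amono) auto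
        ultimately show "a (j' - k + 1) \<le> SigmaS (T i) A \<and> SigmaS (T i) A \<le> a j'" by simp
      qed
    qed
    finally show ?thesis .
  qed
  define s where "s i = SigmaS (S i) A" for i
  define M where "M = Max (s ` {..<k})"
  define m where "m = Min (s ` {..<k})"
  have fin: "finite (s ` {..<k})" by simp
  have "0 \<in> {..<k}" using k2 by simp
  then have ne: "s ` {..<k} \<noteq> {}" by blast
  have sM: "s i \<le> M" if "i < k" for i unfolding M_def using fin that by auto
  have sm: "m \<le> s i" if "i < k" for i unfolding m_def using fin that by auto
  show ?thesis
  proof (cases "m > 0")
    case False
    then have "ratio k S A = \<infinity>" unfolding ratio_def Let_def m_def s_def by auto
    then show ?thesis using e by simp
  next
    case mpos: True
    have ratS: "ratio k S A = ereal (M / m)" using mpos unfolding ratio_def Let_def m_def M_def s_def by auto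
    show ?thesis
    proof (cases "\<exists>i. k \<le> i \<and> i \<le> n \<and> a i \<le> (1+\<epsilon>) * a (i - k + 1)")
      case True
      then obtain i where i: "k \<le> i" "i \<le> n" "a i \<le> (1+\<epsilon>) * a (i - k + 1)" by blast
      have "0 < a (i - k + 1)" using i k2 by (intro apos) auto
      then have "a i / a (i - k + 1) \<le> 1 + \<epsilon>" using i(3) by (simp add: divide_le_eq)
      then have "?X \<le> ereal (1+\<epsilon>)" using single[OF i(1,2)] by (meson ereal_less_eq(3) order.trans)
      also have "\<dots> \<le> ereal (1+\<epsilon>) * ratio k S A"
        using ereal_mult_left_mono[OF r1, of "ereal (1+\<epsilon>)"] e by simp
      finally show ?thesis .
    next
      case False
      then have dec: "\<forall>i. k \<le> i \<and> i \<le> n \<longrightarrow> (1+\<epsilon>) * a (i - k + 1) < a i" by auto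
      have Ssub: "S i \<subseteq> {1..n}" if "i < k" for i using fS that unfolding feasible_def n_def by auto
      have Sdisj: "S i \<inter> S i' = {}" if "i < k" "i' < k" "i \<noteq> i'" for i i'
        using fS that unfolding feasible_def by auto
      have Sfin: "finite (S i)" if "i < k" for i using Ssub[OF that] finite_subset by blast
      have sS: "s i = sum a (S i)" for i unfolding s_def Sig ..
      have nn: "\<forall>i. 1 \<le> i \<and> i \<le> n \<longrightarrow> 0 \<le> a i" using apos by (auto intro: less_imp_le)
      have mono: "\<forall>i i'. 1 \<le> i \<and> i \<le> i' \<and> i' \<le> n \<longrightarrow> a i \<le> a i'" using amono by blast
      have anS: "0 \<le> a t" if "i < k" "t \<in> S i" for i t using Ssub[OF that(1)] that(2) nn by auto
      have Sne: "S i \<noteq> {}" if "i < k" for i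
      proof
        assume "S i = {}"
        then have "s i = 0" unfolding sS by simp
        then show False using sm[OF that] mpos by simp
      qed
      define U where "U = (\<Union>i<k. S i)"
      have Ufin: "finite U" unfolding U_def using Sfin by auto
      have Une: "U \<noteq> {}" unfolding U_def using Sne k2 by fastforce
      define j where "j = Max U"
      have jU: "j \<in> U" unfolding j_def using Ufin Une by (rule Max_in)
      then obtain i0 where i0: "i0 < k" "j \<in> S i0" unfolding U_def by blast
      have jn: "1 \<le> j" "j \<le> n" using Ssub[OF i0(1)] i0(2) by auto
      have Sj: "t \<le> j" if "i < k" "t \<in> S i" for i t
        unfolding j_def using Ufin that unfolding U_def by (intro Max_ge) auto
      have kj: "k \<le> j"
      proof -
        have "card U = (\<Sum>i<k. card (S i))" unfolding U_def
          by (rule card_UN_disjoint) (use Sfin Sdisj in auto)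
        also have "\<dots> \<ge> (\<Sum>i<k. 1)"
          by (rule sum_mono) (use Sfin Sne in \<open>auto simp: Suc_le_eq card_gt_0_iff\<close>)
        finally have "k \<le> card U" by simp
        moreover have "U \<subseteq> {1..j}" unfolding U_def using Ssub Sj by fastforce
        then have "card U \<le> j" using card_mono[of "{1..j}" U] by simp
        ultimately show ?thesis by simp
      qed
      have aj: "a j \<le> M"
      proof -
        have "a j \<le> sum a (S i0)" using i0 Sfin anS by (intro member_le_sum) auto
        then show ?thesis using sM[OF i0(1)] unfolding sS by simp
      qed
      have M0: "0 \<le> M" using aj apos[OF jn] by simp
      have e0: "0 < 1 + \<epsilon>" using e by simp
      have mfin: "ereal (M / (m / (1+\<epsilon>))) = ereal (1+\<epsilon>) * ratio k S A"
        unfolding ratS using mpos e0 by (simp add: field_simps)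
      show ?thesis
      proof (cases "m/(1+\<epsilon>) \<le> a (j-k+1)")
        case True
        have "?X \<le> ereal (a j / a (j - k + 1))" using single kj jn by simp
        also have "a j / a (j - k + 1) \<le> M / (m / (1+\<epsilon>))"
          using True aj M0 mpos e0 by (intro frac_le) auto
        then have "ereal (a j / a (j - k + 1)) \<le> ereal (M / (m / (1+\<epsilon>)))" by simp
        finally show ?thesis unfolding mfin .
      next
        case small: False
        show ?thesis
        proof (cases "int j - C + 1 \<le> 1")
          case True
          have "?X \<le> ratio k S A"
          proof (rule window)
            show "j \<le> length A" using jn n_def by simp
            show "k \<le> j" by (rule kj)
            show "feasible k S A" by (rule fS)
            show "\<forall>i<k. S i \<subseteq> {nat (max 1 (int j - C + 1))..j}"
              using True Ssub Sj by fastforce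
            show "j \<in> (\<Union>i<k. S i)" using i0 by blast
          qed
          then show ?thesis using rle by (rule order.trans)
        next
          case False
          define p where "p = nat (int j - C)"
          have hp: "int p = int j - C" unfolding p_def using False by simp
          have p1: "1 \<le> p" using False hp by simp
          have pj: "p < j" using hp CK k2 by simp
          have lo: "nat (max 1 (int j - C + 1)) = p + 1" using hp p1 by simp
          have pidx: "p + cn*(k-1) = j - k + 1"
          proof -
            have "int (p + cn*(k-1)) = int j - C + int cn * (int k - 1)"
              using hp k2 by (simp add: of_nat_diff)
            also have "\<dots> = int (j - k + 1)" unfolding CC using kj k2 by (simp add: algebra_simps of_nat_diff)
            finally have h: "int (p + cn*(k-1)) = int (j - k + 1)" .
            then show ?thesis by (metis of_nat_eq_iff)
          qed
          have decay: "(1+\<epsilon>)^cn * a p \<le> a (j-k+1)"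
          proof -
            have "p + cn*(k-1) \<le> n" unfolding pidx using kj jn k2 by linarith
            from geo_decay[OF k2 e dec p1 this] show ?thesis unfolding pidx .
          qed
          have ap: "(1+\<epsilon>)^cn * a p \<le> m / (1+\<epsilon>)" using decay small by simp
          have gsum: "sum a {1..p} \<le> (real k - 1) * (1+\<epsilon>) / \<epsilon> * a p"
            using geo_sum[OF k2 e dec nn mono] p1 pj jn by simp
          have ap0: "0 \<le> a p" using nn p1 pj jn by simp
          obtain c' where c': "cn = Suc c'" using cn by (cases cn) auto
          have loss: "(real k - 1) * (1+\<epsilon>) / \<epsilon> * a p \<le> \<epsilon> * (m / (1+\<epsilon>))"
          proof -
            have "(real k - 1) * (1+\<epsilon>) / \<epsilon> * a p \<le> (\<epsilon>^2 * (1+\<epsilon>)^(cn-1)) * (1+\<epsilon>) / \<epsilon> * a p"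
              using key e0 e ap0 by (intro mult_right_mono divide_right_mono) auto
            also have "\<dots> = \<epsilon> * ((1+\<epsilon>)^cn * a p)"
              unfolding c' using e by (simp add: power2_eq_square field_simps)
            also have "\<dots> \<le> \<epsilon> * (m / (1+\<epsilon>))" using ap e by (intro mult_left_mono) auto
            finally show ?thesis .
          qed
          define T where "T i = S i - {..p}" for i
          have Tsum: "m / (1+\<epsilon>) \<le> SigmaS (T i) A \<and> SigmaS (T i) A \<le> M" if i: "i < k" for i
          proof -
            have split: "sum a (S i) = sum a (S i \<inter> {..p}) + sum a (T i)"
              unfolding T_def using Sfin[OF i] by (rule sum.Int_Diff)
            have "sum a (S i \<inter> {..p}) \<le> sum a {1..p}"
              by (rule sum_mono2) (use Ssub[OF i] nn pj jn in auto)
            then have "sum a (T i) \<ge> s i - \<epsilon> * (m / (1+\<epsilon>))"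
              using split gsum loss unfolding sS by linarith
            moreover have "m - \<epsilon> * (m / (1+\<epsilon>)) = m / (1+\<epsilon>)" using e0 by (simp add: field_simps)
            ultimately have lo: "m / (1+\<epsilon>) \<le> sum a (T i)" using sm[OF i] by linarith
            have "sum a (T i) \<le> sum a (S i)" unfolding T_def
              by (rule sum_mono2) (use Sfin[OF i] anS[OF i] in auto)
            then have "sum a (T i) \<le> M" using sM[OF i] unfolding sS by simp
            then show ?thesis using lo unfolding Sig by simp
          qed
          have "?X \<le> ratio k T A"
          proof (rule window)
            show "j \<le> length A" using jn n_def by simp
            show "k \<le> j" by (rule kj)
            show "feasible k T A" unfolding feasible_def T_def
              using Ssub Sdisj unfolding n_def by blast
            show "\<forall>i<k. T i \<subseteq> {nat (max 1 (int j - C + 1))..j}"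
              unfolding lo T_def using Sj by fastforce
            have "j \<in> T i0" unfolding T_def using i0 pj by simp
            then show "j \<in> (\<Union>i<k. T i)" using i0(1) by blast
          qed
          also have "\<dots> \<le> ereal (M / (m / (1+\<epsilon>)))"
            by (rule ratio_le) (use k2 mpos e0 Tsum in auto)
          finally show ?thesis unfolding mfin .
        qed
      qed
    qed
  qed
qed

lemma key_bound:
  fixes k :: nat and \<epsilon> :: real and c :: int
  assumes k2: "k \<ge> 2" and e: "0 < \<epsilon>" "\<epsilon> < 1"
    and cdef: "c = 1 + \<lceil>(1 + 1 / \<epsilon>) * ln (2 * (real k - 1) / \<epsilon>\<^sup>2)\<rceil>"
  shows "1 \<le> c" "real k - 1 \<le> \<epsilon>^2 * (1+\<epsilon>)^(nat c - 1)"
proof -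
  define L where "L = ln (2 * (real k - 1) / \<epsilon>\<^sup>2)"
  define y where "y = (1 + 1 / \<epsilon>) * L"
  have e2: "\<epsilon>\<^sup>2 < 1" using e by (simp add: power_less_one_iff abs_square_less_1)
  have e20: "0 < \<epsilon>\<^sup>2" using e by simp
  have k1: "2 \<le> 2 * (real k - 1)" using k2 by simp
  have gt1: "1 < 2 * (real k - 1) / \<epsilon>\<^sup>2"
    using e2 e20 k1 by (simp add: less_divide_eq)
  have L0: "0 < L" unfolding L_def using gt1 by simp
  have y0: "0 \<le> y" unfolding y_def using L0 e by simp
  have cy: "nat c - 1 = nat \<lceil>y\<rceil>" unfolding cdef y_def L_def[symmetric] using y0 unfolding y_def
    by (simp add: nat_add_distrib)
  show "1 \<le> c" unfolding cdef y_def[symmetric, unfolded L_def] using y0 unfolding y_def L_def by simp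
  have lnb: "\<epsilon> / (1+\<epsilon>) \<le> ln (1+\<epsilon>)"
  proof -
    have "ln (1 / (1+\<epsilon>)) \<le> 1 / (1+\<epsilon>) - 1" using e by (intro ln_le_minus_one) simp
    moreover have "ln (1 / (1+\<epsilon>)) = - ln (1+\<epsilon>)" using e by (simp add: ln_div)
    moreover have "1 / (1+\<epsilon>) - 1 = - (\<epsilon> / (1+\<epsilon>))" using e by (simp add: field_simps)
    ultimately show ?thesis by linarith
  qed
  have fac: "1 \<le> (1 + 1/\<epsilon>) * ln (1+\<epsilon>)"
  proof -
    have "0 < \<epsilon> * \<epsilon>" using e by simp
    then have hne: "\<epsilon> + \<epsilon> * \<epsilon> \<noteq> 0" using e by linarith
    have "(1 + 1/\<epsilon>) * (\<epsilon> / (1+\<epsilon>)) = 1" using e hne by (simp add: field_simps)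
    moreover have "(1 + 1/\<epsilon>) * (\<epsilon> / (1+\<epsilon>)) \<le> (1 + 1/\<epsilon>) * ln (1+\<epsilon>)"
      using lnb e by (intro mult_left_mono) auto
    ultimately show ?thesis by linarith
  qed
  have "L \<le> y * ln (1+\<epsilon>)"
  proof -
    have "L * 1 \<le> L * ((1 + 1/\<epsilon>) * ln (1+\<epsilon>))" using fac L0 by (intro mult_left_mono) auto
    then show ?thesis unfolding y_def by (simp add: algebra_simps)
  qed
  then have "exp L \<le> exp (y * ln (1+\<epsilon>))" by simp
  also have "exp (y * ln (1+\<epsilon>)) = (1+\<epsilon>) powr y" unfolding powr_def using e by simp
  also have "\<dots> \<le> (1+\<epsilon>) powr (real (nat \<lceil>y\<rceil>))"
  proof (intro powr_mono)
    have "real (nat \<lceil>y\<rceil>) = real_of_int \<lceil>y\<rceil>" using y0 by simp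
    then show "y \<le> real (nat \<lceil>y\<rceil>)" using le_of_int_ceiling[of y] by linarith
    show "1 \<le> 1 + \<epsilon>" using e by simp
  qed
  also have "\<dots> = (1+\<epsilon>)^(nat c - 1)" unfolding cy using e by (simp add: powr_realpow)
  finally have "2 * (real k - 1) / \<epsilon>\<^sup>2 \<le> (1+\<epsilon>)^(nat c - 1)"
    unfolding L_def using gt1 by simp
  then have "2 * (real k - 1) \<le> \<epsilon>^2 * (1+\<epsilon>)^(nat c - 1)" using e20 by (simp add: divide_le_eq mult.commute)
  then show "real k - 1 \<le> \<epsilon>^2 * (1+\<epsilon>)^(nat c - 1)" using k2 by simp
qed

theorem lemma26:
  fixes k :: nat and A :: "nat list" and \<epsilon> :: real and c C :: int
  assumes "k \<ge> 2"
    and "sorted A" and "\<forall>x\<in>set A. x > 0"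
    and "0 < \<epsilon>" and "\<epsilon> < 1"
    and "c = 1 + \<lceil>(1 + 1 / \<epsilon>) * ln (2 * (real k - 1) / \<epsilon>\<^sup>2)\<rceil>"
    and "C = (c + 1) * (int k - 1)"
  shows "OPT k A \<le> (INF j\<in>{k..length A}. OPT_L k (subrange A (int j - C + 1) (int j)))
     \<and> (INF j\<in>{k..length A}. OPT_L k (subrange A (int j - C + 1) (int j)))
         \<le> ereal (1 + \<epsilon>) * OPT k A"
proof
  show "OPT k A \<le> (INF j\<in>{k..length A}. OPT_L k (subrange A (int j - C + 1) (int j)))"
    by (rule INF_greatest) (rule OPT_le_OPT_L, simp)
next
  have c1: "1 \<le> c" and key: "real k - 1 \<le> \<epsilon>^2 * (1+\<epsilon>)^(nat c - 1)"
    using key_bound[OF assms(1,4,5,6)] by auto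
  have cn: "1 \<le> nat c" using c1 by simp
  have CC: "C = (int (nat c) + 1) * (int k - 1)" using assms(7) c1 by simp
  show "(INF j\<in>{k..length A}. OPT_L k (subrange A (int j - C + 1) (int j))) \<le> ereal (1 + \<epsilon>) * OPT k A"
    unfolding OPT_def
  proof (rule ereal_le_mult_INF)
    show "0 < 1 + \<epsilon>" using assms(4) by simp
    show "\<forall>S\<in>{S. feasible k S A}. (INF j\<in>{k..length A}. OPT_L k (subrange A (int j - C + 1) (int j))) \<le> ereal (1 + \<epsilon>) * ratio k S A"
      using part2[OF assms(1,2,3,4) cn key CC] by blast
  qed
qed

end
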